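(* Let $N$ be a positive integer and $t>-\log N$. For integers $n\ge N$ let $$\eta_n(t,N)=\sum_{k=N}^{n}\Big(\frac{1}{t+\log(k+\frac12)}-\frac{1}{H_k-\gamma+t}\Big),$$ and set $\eta_{N-1}(t,N)=0$. (1) The sequence $(\eta_n(t,N))_{n\ge N}$ is positive, strictly increasing and bounded above; hence $\eta(t,N)=\lim_{n\to\infty}\eta_n(t,N)>0$ exists. (2) For all $n\ge N$, $\eta(t,N)-\eta_{n-1}(t,N)=\eta(t,n)$ and $$\frac1{24}\int_{n+1}^\infty\frac{dx}{x^2(t+\log x)^2}\le\eta(t,n)\le\frac1{24}\int_n^\infty\frac{dx}{x^2(t+\log x)^2}.$$ (3) For all $n\ge N$, $$\frac{1}{24(n+1)(t+\log(n+1))^2}-\frac{1}{12(n+1)(t+\log(n+1))^3}<\eta(t,N)-\eta_{n-1}(t,N)<\frac{1}{24n(t+\log n)^2}.$$ Consequently $\eta(t,N)=\eta_{n-1}(t,N)+\frac{1+o(1)}{24n(\log n)^2}$ as $n\to\infty$, and $\eta(t,N)=O\!\left(\frac1{Nt^2}\right)$ as $t\to\infty$, with implied constant independent of $N$.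
   Context: $\gamma$ is the Euler–Mascheroni constant and $H_k=\sum_{j=1}^k1/j$ is the $k$-th harmonic number. *)

theory Defs
  imports "HOL-Analysis.Analysis" "HOL-Library.Landau_Symbols"
begin

text \<open>H_k is harm k, gamma is euler_mascheroni (HOL-Analysis Harmonic_Numbers).
  eta_part t N n is eta_n(t,N); for n = N - 1 the sum is empty, hence 0.\<close>

definition eta_part :: "real \<Rightarrow> nat \<Rightarrow> nat \<Rightarrow> real" where
  "eta_part t N n =
     (\<Sum>k = N..n. 1 / (t + ln (real k + 1/2)) - 1 / (harm k - euler_mascheroni + t))"

definition eta :: "real \<Rightarrow> nat \<Rightarrow> real" where
  "eta t N = lim (\<lambda>n. eta_part t N n)"

definition eta_integrand :: "real \<Rightarrow> real \<Rightarrow> real" where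
  "eta_integrand t x = 1 / (x^2 * (t + ln x)^2)"

end

theory Submission
  imports Defs "HOL-Real_Asymp.Real_Asymp"
begin


lemma ln_diff_upper:
  fixes x :: real assumes x0: "0 \<le> x" and x1: "x < 1"
  shows "ln (1+x) - ln (1-x) \<le> 2*x + 2*x^3/(3*((1-x)*(1+x)))"
proof -
  define g where "g y = 2*y + 2*y^3/(3*((1-y)*(1+y))) - (ln (1+y) - ln (1-y))" for y :: real
  define g' where "g' y = 2 + (18 * (y\<^sup>2 * ((1 - y) * (1 + y))) + 12 * (y ^ 3 * y)) /
        (9 * ((1 - y) * ((1 + y) * ((1 - y) * (1 + y))))) - (1/(1+y) + 1/(1-y))" for y :: real
  have "g 0 \<le> g x"
  proof (rule deriv_nonneg_imp_mono[where g=g and g'=g'])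
    fix y assume y: "y \<in> {0..x}"
    hence y1: "y < 1" "0 \<le> y" using x1 by auto
    show "(g has_real_derivative g' y) (at y)"
      unfolding g_def g'_def using y1 by (auto intro!: derivative_eq_intros)
  next
    fix y assume y: "y \<in> {0..x}"
    hence y1: "y < 1" "0 \<le> y" using x1 by auto
    define a where "a = (1-y)*(1+y)"
    have y4: "0 \<le> y*(y*(y*y))" using y1 by simp
    have p: "a > 0" using y1 unfolding a_def by simp
    have e: "1/(1+y) + 1/(1-y) = 2/a" using y1 unfolding a_def by (simp add: field_simps)
    have ay: "a = 1 - y^2" unfolding a_def by (simp add: algebra_simps power2_eq_square)
    have key: "18*a^2 + 18*y^2*a + 12*y^4 - 18*a \<ge> 0"
      using y4 unfolding ay by (simp add: algebra_simps power2_eq_square power4_eq_xxxx)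
    have d1: "(1 - y) * ((1 + y) * ((1 - y) * (1 + y))) = a^2" by (simp add: a_def power2_eq_square algebra_simps)
    have d2: "y\<^sup>2 * ((1 - y) * (1 + y)) = y^2 * a" by (simp add: a_def)
    have d3: "y^3 * y = y^4" by (simp add: power4_eq_xxxx power3_eq_cube)
    have "g' y = 2 + (18*(y^2*a) + 12*y^4)/(9*a^2) - 2/a"
      unfolding g'_def e d1 d2 d3 by simp
    also have "\<dots> = (18*a^2 + 18*y^2*a + 12*y^4 - 18*a) / (9*a^2)"
      using p by (simp add: field_simps power2_eq_square)
    finally have "g' y = (18*a^2 + 18*y^2*a + 12*y^4 - 18*a) / (9*a^2)" .
    thus "g' y \<ge> 0" using key p by simp
  qed (use x0 in auto)
  thus ?thesis by (simp add: g_def)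
qed

lemma ln_diff_lower:
  fixes x :: real assumes x0: "0 \<le> x" and x1: "x < 1"
  shows "ln (1+x) - ln (1-x) \<ge> 2*x + 2*x^3/3"
proof -
  define g where "g y = (ln (1+y) - ln (1-y)) - (2*y + 2*y^3/3)" for y :: real
  define g' where "g' y = (1/(1+y) + 1/(1-y)) - (2 + 2*y^2)" for y :: real
  have "g 0 \<le> g x"
  proof (rule deriv_nonneg_imp_mono[where g=g and g'=g'])
    fix y assume y: "y \<in> {0..x}"
    hence y1: "y < 1" "0 \<le> y" using x1 by auto
    have "(g has_real_derivative (1 / (1 + y) + 1 / (1 - y) - (2 + 2 * (3 * y\<^sup>2) / 3))) (at y)"
      unfolding g_def using y1 by (auto intro!: derivative_eq_intros)
    thus "(g has_real_derivative g' y) (at y)" unfolding g'_def by simp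
  next
    fix y assume y: "y \<in> {0..x}"
    hence y1: "y < 1" "0 \<le> y" using x1 by auto
    define a where "a = (1-y)*(1+y)"
    have y4: "0 \<le> y*(y*(y*y))" using y1 by simp
    have p: "a > 0" using y1 unfolding a_def by simp
    have e: "1/(1+y) + 1/(1-y) = 2/a" using y1 unfolding a_def by (simp add: field_simps)
    have ay: "a = 1 - y^2" unfolding a_def by (simp add: algebra_simps power2_eq_square)
    have "(2 + 2*y^2) * a \<le> 2" using y4 unfolding ay by (simp add: algebra_simps power2_eq_square)
    hence "2 + 2*y^2 \<le> 2/a" using p by (simp add: field_simps)
    thus "g' y \<ge> 0" unfolding g'_def using e by simp
  qed (use x0 in auto)
  thus ?thesis by (simp add: g_def)
qed


definition dd :: "nat \<Rightarrow> real" where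
  "dd k = harm k - euler_mascheroni - ln (real k + 1/2)"

lemma dd_LIMSEQ: "dd \<longlonglongrightarrow> 0"
proof -
  have 1: "(\<lambda>n. harm n - ln (real n) - euler_mascheroni) \<longlonglongrightarrow> 0"
    using euler_mascheroni_LIMSEQ by (simp add: LIM_zero)
  have 2: "(\<lambda>n. ln (real n + 1/2) - ln (real n)) \<longlonglongrightarrow> 0" by real_asymp
  have "(\<lambda>n. (harm n - ln (real n) - euler_mascheroni) - (ln (real n + 1/2) - ln (real n))) \<longlonglongrightarrow> 0 - 0"
    by (intro tendsto_diff 1 2)
  thus ?thesis unfolding dd_def by (simp add: algebra_simps)
qed

lemma dd_step: "dd k - dd (Suc k) = (ln (1+x) - ln (1-x)) - 2*x"
  if "x = 1/(2*(real k + 1))" for k x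
proof -
  have x0: "0 < x" "x \<le> 1/2" unfolding that by (auto simp: field_simps)
  have a: "real k + 3/2 = (real k + 1) * (1+x)" "real k + 1/2 = (real k + 1) * (1-x)"
    using that by (auto simp: field_simps)
  have "ln (real k + 3/2) = ln (real k + 1) + ln (1+x)" "ln (real k + 1/2) = ln (real k + 1) + ln (1-x)"
    unfolding a using x0 by (auto simp: ln_mult)
  moreover have "harm (Suc k) = harm k + 2*x" using that by (simp add: harm_Suc field_simps)
  moreover have "ln (real (Suc k) + 1/2) = ln (real k + 3/2)" by (simp add: add_ac)
  ultimately show ?thesis unfolding dd_def by linarith
qed

lemma nonneg_of_dec_to_zero:
  fixes e :: "nat \<Rightarrow> real"
  assumes "\<And>j. j \<ge> k \<Longrightarrow> e (Suc j) \<le> e j" and "e \<longlonglongrightarrow> 0"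
  shows "e k \<ge> 0"
proof -
  have "e n \<le> e k" if "n \<ge> k" for n using that
  proof (induction n)
    case 0 thus ?case by simp
  next
    case (Suc n)
    show ?case
    proof (cases "Suc n = k")
      case False
      hence "n \<ge> k" using Suc.prems by simp
      thus ?thesis using Suc.IH assms(1)[of n] by simp
    qed simp
  qed
  thus ?thesis using LIMSEQ_le_const2[OF assms(2)] by blast
qed


lemma dd_upper: "k \<ge> 1 \<Longrightarrow> dd k \<le> 1/(24 * real k * (real k + 1))"
proof -
  assume k: "k \<ge> 1"
  define e where "e j = 1/(24 * real j * (real j + 1)) - dd j" for j
  have "e k \<ge> 0"
  proof (rule nonneg_of_dec_to_zero)
    show "e \<longlonglongrightarrow> 0"
    proof -
      have "(\<lambda>j. 1/(24 * real j * (real j + 1))) \<longlonglongrightarrow> 0"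
        by real_asymp
      from tendsto_diff[OF this dd_LIMSEQ] show ?thesis unfolding e_def by simp
    qed
  next
    fix j assume j: "j \<ge> k"
    define x where "x = 1/(2*(real j + 1))"
    define m where "m = real j + 1"
    have m: "m \<ge> 2" using j k unfolding m_def by simp
    have x: "0 \<le> x" "x < 1" unfolding x_def by (auto simp: field_simps)
    have "dd j - dd (Suc j) \<le> 2*x^3/(3*((1-x)*(1+x)))"
      using dd_step[OF x_def] ln_diff_upper[OF x] by simp
    also have "\<dots> = 1/(3*m*(4*m^2-1))" unfolding x_def m_def[symmetric]
      using m by (simp add: field_simps power3_eq_cube power2_eq_square)
    also have "\<dots> \<le> 1/(3*m*(4*m^2-4))"
    proof -
      have mm: "4 \<le> m*m" using mult_mono[OF m m] m by simp
      show ?thesis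
        using m mm by (intro divide_left_mono mult_left_mono mult_pos_pos) (auto simp: power2_eq_square)
    qed
    also have "\<dots> = 1/(24 * (m-1) * m) - 1/(24 * m * (m + 1))"
    proof -
      have n: "m \<noteq> 0" "m - 1 \<noteq> 0" "m + 1 \<noteq> 0" using m by auto
      have g: "1/(24*a*m) - 1/(24*m*b) = (b-a)/(24*(a*m*b))" if "a \<noteq> 0" "b \<noteq> 0" for a b
        using that n by (simp add: field_simps)
      have h: "3*m*(4*m^2-4) = 24*((m-1)*m*(m+1)) / 2" by (simp add: algebra_simps power2_eq_square)
      show ?thesis unfolding g[OF n(2) n(3)] h by simp
    qed
    also have "\<dots> = 1/(24 * real j * (real j + 1)) - 1/(24 * real (Suc j) * (real (Suc j) + 1))"
      unfolding m_def by simp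
    finally show "e (Suc j) \<le> e j" unfolding e_def by simp
  qed
  thus ?thesis unfolding e_def by simp
qed

lemma dd_lower: "dd k \<ge> 1/(24 * (real k + 1)^2)"
proof -
  define e where "e j = dd j - 1/(24 * (real j + 1)^2)" for j
  have "e k \<ge> 0"
  proof (rule nonneg_of_dec_to_zero)
    show "e \<longlonglongrightarrow> 0"
    proof -
      have "(\<lambda>j. 1/(24 * (real j + 1)^2)) \<longlonglongrightarrow> 0"
        by real_asymp
      from tendsto_diff[OF dd_LIMSEQ this] show ?thesis unfolding e_def by simp
    qed
  next
    fix j
    define x where "x = 1/(2*(real j + 1))"
    define m where "m = real j + 1"
    have m: "m \<ge> 1" unfolding m_def by simp
    have x: "0 \<le> x" "x < 1" unfolding x_def by (auto simp: field_simps)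
    have A: "m^2 > 0" "(m+1)^2 > 0" using m by auto
    have "1/(24 * m^2) - 1/(24 * (m+1)^2) = ((m+1)^2 - m^2)/(24*m^2*(m+1)^2)"
      using A by (simp add: field_simps)
    also have "(m+1)^2 - m^2 = 2*m+1" by (simp add: power2_eq_square algebra_simps)
    finally have e1: "1/(24 * m^2) - 1/(24 * (m+1)^2) = (2*m+1)/(24*m^2*(m+1)^2)" .
    have "(2*m+1) * (12*m^3) \<le> 1 * (24*m^2*(m+1)^2)"
    proof -
      have "24*m^2*(m+1)^2 - (2*m+1) * (12*m^3) = 12*m^2*(3*m+2)"
        by (simp add: power2_eq_square power3_eq_cube algebra_simps)
      also have "\<dots> \<ge> 0" using m by simp
      finally show ?thesis by simp
    qed
    hence "(2*m+1)/(24*m^2*(m+1)^2) \<le> 1/(12*m^3)"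
    proof -
      have D: "24*m^2*(m+1)^2 > 0" "12*m^3 > 0" using A m by auto
      have "(2*m+1) \<le> (24*m^2*(m+1)^2) / (12*m^3)" using D \<open>(2*m+1) * (12*m^3) \<le> 1 * (24*m^2*(m+1)^2)\<close>
        by (simp add: le_divide_eq mult.commute)
      thus ?thesis using D by (simp add: divide_le_eq)
    qed
    hence "1/(24 * m^2) - 1/(24 * (m+1)^2) \<le> 1/(12*m^3)" using e1 by simp
    also have "1/(12*m^3) = 2*x^3/3" unfolding x_def m_def[symmetric]
      by (simp add: field_simps power3_eq_cube)
    also have "\<dots> \<le> dd j - dd (Suc j)"
      using dd_step[OF x_def] ln_diff_lower[OF x] by simp
    finally have *: "1/(24 * m^2) - 1/(24 * (m+1)^2) \<le> dd j - dd (Suc j)" .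
    have eq: "real (Suc j) + 1 = m + 1" "real j + 1 = m" by (simp_all add: m_def)
    show "e (Suc j) \<le> e j" unfolding e_def eq using * by linarith
  qed
  thus ?thesis unfolding e_def by simp
qed


lemma f_cont:
  assumes a: "a > 0" "t + ln a > 0"
  shows "continuous_on {a..} (eta_integrand t)"
proof -
  have "\<forall>x\<in>{a..}. x > 0 \<and> t + ln x > 0"
    using a by (auto intro: order.strict_trans2[of 0 "t + ln a"] simp: ln_mono)
  hence pos: "a \<le> x \<Longrightarrow> t + ln x > 0" "a \<le> x \<Longrightarrow> x > 0" for x by auto
  show ?thesis unfolding eta_integrand_def
    by (intro continuous_intros) (auto dest: pos)
qed

lemma fu_cont:
  assumes a: "a > 0" "t + ln a > 0"
  shows "continuous_on {a..} (\<lambda>x. eta_integrand t x / (t + ln x))"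
proof -
  have "\<forall>x\<in>{a..}. x > 0 \<and> t + ln x > 0"
    using a by (auto intro: order.strict_trans2[of 0 "t + ln a"] simp: ln_mono)
  hence pos: "a \<le> x \<Longrightarrow> t + ln x > 0" "a \<le> x \<Longrightarrow> x > 0" for x by auto
  show ?thesis unfolding eta_integrand_def
    by (intro continuous_intros) (auto dest: pos)
qed

lemma G_deriv:
  assumes "x > 0" "t + ln x > 0"
  shows "((\<lambda>x. - 1/(x * (t + ln x)^2)) has_real_derivative
           (eta_integrand t x + 2 * (eta_integrand t x / (t + ln x)))) (at x)"
proof -
  have D: "((\<lambda>x. - 1/(x * (t + ln x)^2)) has_real_derivative
     (-((- (2 * t) - 2 * ln x - (t + ln x)^2) / (x * (t + ln x)^2 * (x * (t + ln x)^2))))) (at x)"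
    using assms by (auto intro!: derivative_eq_intros)
  define v where "v = t + ln x"
  have v: "v > 0" using assms v_def by simp
  have ee: "-(2 * t) - 2 * ln x = -2 * v" unfolding v_def by simp
  have "-((- (2 * t) - 2 * ln x - (t + ln x)^2) / (x * (t + ln x)^2 * (x * (t + ln x)^2)))
     = eta_integrand t x + 2 * (eta_integrand t x / (t + ln x))"
    unfolding ee eta_integrand_def v_def[symmetric] using v assms(1)
    by (simp add: field_simps power2_eq_square)
  with D show ?thesis by simp
qed


lemma improper_sums:
  fixes p :: "real \<Rightarrow> real"
  assumes cont: "continuous_on {a..} p" and nn: "\<And>x. x \<ge> a \<Longrightarrow> p x \<ge> 0"
    and bnd: "\<And>b. b \<ge> a \<Longrightarrow> integral {a..b} p \<le> B"
  shows "p integrable_on {a..}"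
    and "(\<lambda>k. integral {a..a + real k} p) \<longlonglongrightarrow> integral {a..} p"
    and "(\<lambda>j. integral {a + real j..a + real j + 1} p) sums integral {a..} p"
proof -
  have int: "p integrable_on {c..b}" if "c \<ge> a" for c b
    by (rule integrable_continuous_interval, rule continuous_on_subset[OF cont]) (use that in auto)
  define f where "f = (\<lambda>n x. if x \<in> {a..a + real n} then p x else 0)"
  have has_integral_f: "\<And>n. (f n has_integral (integral {a..a + real n} p)) {a..}"
    unfolding f_def
    by (metis (no_types, lifting) ext Icc_subset_Ici_iff order.refl
        has_integral_restrict int integrable_integral)
  have *: "p integrable_on {a..} \<and> (\<lambda>n. integral {a..} (f n)) \<longlonglongrightarrow> integral {a..} p"
  proof (intro monotone_convergence_increasing allI ballI)
    fix n
    show "f n integrable_on {a..}"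
      using has_integral_f by blast
  next
    fix n x
    show "f n x \<le> f (Suc n) x" using nn by (auto simp: f_def)
  next
    fix x :: real assume x: "x \<in> {a..}"
    have "eventually (\<lambda>n. real n \<ge> x - a) at_top"
      by (meson eventually_sequentiallyI nat_ceiling_le_eq)
    with x have "eventually (\<lambda>n. f n x = p x) at_top"
      by (auto simp add: eventually_mono f_def)
    thus "(\<lambda>n. f n x) \<longlonglongrightarrow> p x" by (simp add: tendsto_eventually)
  next
    have "norm (integral {a..} (f n)) \<le> B" for n
    proof -
      have "integral {a..} (f n) = integral {a..a + real n} p"
        using has_integral_f integral_unique by blast
      moreover have "integral {a..a + real n} p \<ge> 0"
        by (rule integral_nonneg[OF int]) (auto intro: nn)
      ultimately show ?thesis using bnd[of "a + real n"] by simp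
    qed
    thus "bounded (range(\<lambda>k. integral {a..} (f k)))"
      by (metis (no_types, lifting) boundedI rangeE)
  qed
  show "p integrable_on {a..}" using * by blast
  have eqf: "integral {a..} (f n) = integral {a..a + real n} p" for n
    using has_integral_f integral_unique by blast
  show lim: "(\<lambda>k. integral {a..a + real k} p) \<longlonglongrightarrow> integral {a..} p"
    using * unfolding eqf by blast
  have ps: "(\<Sum>j<k. integral {a + real j..a + real j + 1} p) = integral {a..a + real k} p" for k
  proof (induction k)
    case 0 thus ?case by simp
  next
    case (Suc k)
    have c: "integral {a..a + real k} p + integral {a + real k..a + real k + 1} p = integral {a..a + real k + 1} p"
      by (rule Henstock_Kurzweil_Integration.integral_combine) (auto intro: int)
    have e: "a + real (Suc k) = a + real k + 1" by simp
    show ?case unfolding sum.lessThan_Suc Suc.IH e by (rule c)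
  qed
  show "(\<lambda>j. integral {a + real j..a + real j + 1} p) sums integral {a..} p"
    unfolding sums_def ps by (rule lim)
qed


lemma f_basic:
  assumes a: "a > 0" "t + ln a > 0" and x: "x \<ge> a"
  shows "x > 0" "t + ln x > 0" "t + ln x \<ge> t + ln a" "eta_integrand t x > 0"
    "eta_integrand t x / (t + ln x) > 0"
proof -
  show x0: "x > 0" using a x by simp
  show l: "t + ln x \<ge> t + ln a" using a x0 x by simp
  show u: "t + ln x > 0" using l a by simp
  show "eta_integrand t x > 0" unfolding eta_integrand_def using x0 u by simp
  thus "eta_integrand t x / (t + ln x) > 0" using u by simp
qed

lemma f_mono:
  assumes a: "a > 0" "t + ln a > 0" and x: "a \<le> x" "x \<le> y"
  shows "eta_integrand t y \<le> eta_integrand t x"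
    "eta_integrand t y / (t + ln y) \<le> eta_integrand t x / (t + ln x)"
proof -
  note bx = f_basic[OF a x(1)] and byy = f_basic[OF a order.trans[OF x]]
  have l: "t + ln x \<le> t + ln y" using bx(1) x by simp
  have p: "x^2 * (t + ln x)^2 \<le> y^2 * (t + ln y)^2"
    using bx by (intro mult_mono power_mono l x(2)) auto
  have q: "0 < x^2 * (t + ln x)^2" using bx by simp
  show 1: "eta_integrand t y \<le> eta_integrand t x"
    unfolding eta_integrand_def using p q by (intro divide_left_mono) auto
  show "eta_integrand t y / (t + ln y) \<le> eta_integrand t x / (t + ln x)"
    using 1 l bx by (intro frac_le) (auto intro: less_imp_le)
qed

lemma f_props:
  assumes a: "a > 0" "t + ln a > 0"
  defines "F \<equiv> eta_integrand t" and "Q \<equiv> (\<lambda>x. eta_integrand t x / (t + ln x))"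
  shows "F integrable_on {a..}" "Q integrable_on {a..}"
    "(\<lambda>j. integral {a + real j..a + real j + 1} F) sums integral {a..} F"
    "integral {a..} F + 2 * integral {a..} Q = 1 / (a * (t + ln a)^2)"
    "integral {a..} Q > 0"
    "integral {a..} Q \<le> integral {a..} F / (t + ln a)"
proof -
  define G where "G x = - 1/(x * (t + ln x)^2)" for x
  note bas = f_basic[OF a]
  have hint: "((\<lambda>x. F x + 2 * Q x) has_integral (G b - G c)) {c..b}" if "a \<le> c" "c \<le> b" for c b
  proof -
    have "((\<lambda>x. F x + 2 * Q x) has_integral (G b - G c)) {c..b}"
      apply (rule fundamental_theorem_of_calculus[OF that(2)])
      unfolding has_real_derivative_iff_has_vector_derivative[symmetric] G_def F_def Q_def
      apply (rule DERIV_subset[OF G_deriv])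
      using bas that by auto
    thus ?thesis .
  qed
  have Gle: "G b \<le> 0" if "b \<ge> a" for b unfolding G_def using bas[OF that] by simp
  have intF: "F integrable_on {c..b}" if "a \<le> c" for c b
    unfolding F_def by (rule integrable_continuous_interval, rule continuous_on_subset[OF f_cont[OF a]]) (use that in auto)
  have intQ: "Q integrable_on {c..b}" if "a \<le> c" for c b
    unfolding Q_def by (rule integrable_continuous_interval, rule continuous_on_subset[OF fu_cont[OF a]]) (use that in auto)
  have bF: "integral {a..b} F \<le> 1 / (a * (t + ln a)^2)" if "b \<ge> a" for b
  proof -
    have "integral {a..b} F \<le> G b - G a"
      by (rule has_integral_le[OF integrable_integral[OF intF] hint]) (use that bas in \<open>auto simp: F_def Q_def less_imp_le\<close>)
    also have "\<dots> \<le> 1 / (a * (t + ln a)^2)" using Gle[OF that] by (simp add: G_def)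
    finally show ?thesis .
  qed
  have bQ: "integral {a..b} Q \<le> 1 / (a * (t + ln a)^2)" if "b \<ge> a" for b
  proof -
    have "integral {a..b} Q \<le> G b - G a"
    proof (rule has_integral_le[OF integrable_integral[OF intQ] hint])
      fix x assume "x \<in> {a..b}"
      hence "F x > 0" "Q x > 0" using bas unfolding F_def Q_def by auto
      thus "Q x \<le> F x + 2 * Q x" by simp
    qed (use that in auto)
    also have "\<dots> \<le> 1 / (a * (t + ln a)^2)" using Gle[OF that] by (simp add: G_def)
    finally show ?thesis .
  qed
  have cF: "continuous_on {a..} F" unfolding F_def by (rule f_cont[OF a])
  have cQ: "continuous_on {a..} Q" unfolding Q_def by (rule fu_cont[OF a])
  have nF: "F x \<ge> 0" if "x \<ge> a" for x using bas[OF that] unfolding F_def by simp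
  have nQ: "Q x \<ge> 0" if "x \<ge> a" for x using bas[OF that] unfolding Q_def by simp
  note IF = improper_sums[OF cF nF bF] and IQ = improper_sums[OF cQ nQ bQ]
  show "F integrable_on {a..}" "Q integrable_on {a..}" using IF IQ by auto
  show "(\<lambda>j. integral {a + real j..a + real j + 1} F) sums integral {a..} F" using IF by auto
  have "(\<lambda>k. integral {a..a + real k} F + 2 * integral {a..a + real k} Q) \<longlonglongrightarrow> integral {a..} F + 2 * integral {a..} Q"
    by (intro tendsto_intros IF(2) IQ(2))
  moreover have "(\<lambda>k. integral {a..a + real k} F + 2 * integral {a..a + real k} Q) = (\<lambda>k. G (a + real k) - G a)"
  proof
    fix k
    have "integral {a..a + real k} (\<lambda>x. F x + 2 * Q x) = G (a + real k) - G a"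
      using hint[of a "a + real k"] by (simp add: integral_unique)
    moreover have "integral {a..a + real k} (\<lambda>x. F x + 2 * Q x) = integral {a..a + real k} F + 2 * integral {a..a + real k} Q"
      using intF[of a] intQ[of a] by (simp add: integral_add integrable_on_cmult_left)
    ultimately show "integral {a..a + real k} F + 2 * integral {a..a + real k} Q = G (a + real k) - G a" by simp
  qed
  moreover have "(\<lambda>k. G (a + real k) - G a) \<longlonglongrightarrow> 0 - G a"
  proof -
    have "(\<lambda>k. G (a + real k)) \<longlonglongrightarrow> 0" unfolding G_def by real_asymp
    thus ?thesis by (intro tendsto_intros)
  qed
  ultimately show "integral {a..} F + 2 * integral {a..} Q = 1 / (a * (t + ln a)^2)"
    using LIMSEQ_unique by (fastforce simp: G_def)
  show "integral {a..} Q > 0"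
  proof -
    have sQ: "(\<lambda>j. integral {a + real j..a + real j + 1} Q) sums integral {a..} Q" using IQ by auto
    have "integral {a + real j..a + real j + 1} Q \<ge> 0" for j
      by (rule integral_nonneg[OF intQ]) (auto intro: nQ)
    moreover have "integral {a + real 0..a + real 0 + 1} Q > 0"
    proof -
      have "integral {a..a+1} (\<lambda>x. Q (a+1)) \<le> integral {a..a+1} Q"
        by (rule integral_le[OF _ intQ]) (auto simp: Q_def intro: f_mono(2)[OF a])
      moreover have "Q (a+1) > 0" using bas[of "a+1"] unfolding Q_def by simp
      ultimately show ?thesis by simp
    qed
    ultimately show ?thesis using suminf_pos2[OF sums_summable[OF sQ]] sums_unique[OF sQ] by metis
  qed
  show "integral {a..} Q \<le> integral {a..} F / (t + ln a)"
  proof (rule has_integral_le[OF integrable_integral has_integral_divide[OF integrable_integral]])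
    show "Q integrable_on {a..}" "F integrable_on {a..}" using IF IQ by auto
    fix x assume "x \<in> {a..}"
    hence "x \<ge> a" by simp
    note b = bas[OF this]
    show "Q x \<le> F x / (t + ln a)" unfolding Q_def F_def
      using b(2,3,4) a by (intro divide_left_mono) (auto intro: mult_pos_pos less_imp_le)
  qed
qed


definition tm :: "real \<Rightarrow> nat \<Rightarrow> real" where
  "tm t k = 1 / (t + ln (real k + 1/2)) - 1 / (harm k - euler_mascheroni + t)"

lemma dd_pos: "dd k > 0"
  using dd_lower[of k] by (smt (verit) divide_pos_pos zero_less_power of_nat_0_le_iff)

lemma tm_eq:
  assumes c: "t + ln (real k + 1/2) > 0"
  shows "tm t k = dd k / ((t + ln (real k + 1/2)) * ((t + ln (real k + 1/2)) + dd k))"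
proof -
  define c where "c = t + ln (real k + 1/2)"
  have e: "harm k - euler_mascheroni + t = c + dd k" unfolding c_def dd_def by simp
  have p: "c > 0" "c + dd k > 0" using c dd_pos[of k] unfolding c_def by auto
  show ?thesis unfolding tm_def c_def[symmetric] e using p by (simp add: field_simps)
qed

lemma tm_pos:
  assumes c: "t + ln (real k + 1/2) > 0"
  shows "tm t k > 0"
  using tm_eq[OF c] dd_pos[of k] c by simp

lemma tm_le:
  assumes c: "t + ln (real k + 1/2) > 0" and k: "k \<ge> 1"
  shows "tm t k \<le> 1 / (24 * real k * (real k + 1) * (t + ln (real k + 1/2))^2)"
proof -
  define c where "c = t + ln (real k + 1/2)"
  have p: "c > 0" using c unfolding c_def by auto
  have "tm t k = dd k / (c * (c + dd k))" using tm_eq[OF c] unfolding c_def .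
  also have "\<dots> \<le> dd k / c^2"
    using p dd_pos[of k] by (intro divide_left_mono) (auto simp: power2_eq_square)
  also have "\<dots> \<le> (1/(24 * real k * (real k + 1))) / c^2"
    using dd_upper[OF k] p by (intro divide_right_mono) auto
  finally show ?thesis unfolding c_def by simp
qed

lemma tm_ge:
  assumes c: "t + ln (real k + 1/2) > 0" and k: "k \<ge> 1"
  shows "tm t k \<ge> eta_integrand t (real k + 1) / 24"
proof -
  define c where "c = t + ln (real k + 1/2)"
  define w where "w = t + ln (real k + 1)"
  have p: "c > 0" using c unfolding c_def by auto
  have "ln ((real k + 1/2) / (real k + 1)) \<le> (real k + 1/2) / (real k + 1) - 1"
    by (rule ln_le_minus_one) simp
  moreover have "ln ((real k + 1/2) / (real k + 1)) = ln (real k + 1/2) - ln (real k + 1)"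
    by (rule ln_divide_pos) auto
  moreover have "(real k + 1/2) / (real k + 1) - 1 = - 1 / (2 * (real k + 1))"
    by (simp add: field_simps)
  ultimately have "ln (real k + 1/2) - ln (real k + 1) \<le> - 1 / (2 * (real k + 1))"
    by linarith
  moreover have "dd k \<le> 1 / (2 * (real k + 1))"
  proof -
    have k1: "real k \<ge> 1" using k by simp
    have "24 * 1 * (real k + 1) \<le> 24 * real k * (real k + 1)"
      using k1 by (intro mult_right_mono mult_left_mono) auto
    hence "1/(24 * real k * (real k + 1)) \<le> 1 / (2 * (real k + 1))"
      using k1 by (intro divide_left_mono) auto
    thus ?thesis using dd_upper[OF k] by simp
  qed
  ultimately have cw: "c + dd k \<le> w" unfolding c_def w_def by simp
  have cw': "c \<le> w" using cw dd_pos[of k] by simp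
  have "eta_integrand t (real k + 1) / 24 = 1 / (24 * (real k + 1)^2) / w^2"
    unfolding eta_integrand_def w_def by simp
  also have "\<dots> \<le> dd k / w^2"
    using dd_lower[of k] by (intro divide_right_mono) auto
  also have "\<dots> \<le> dd k / (c * (c + dd k))"
    using p dd_pos[of k] cw cw' by (intro divide_left_mono) (auto simp: power2_eq_square intro!: mult_mono)
  also have "\<dots> = tm t k" using tm_eq[OF c] unfolding c_def by simp
  finally show ?thesis .
qed

lemma tangent_ineq:
  fixes z w :: real assumes z: "z > 0" and w: "w > 0"
  shows "1/w^2 - 2*(exp (z - w) - 1)/w^3 \<le> 1/z^2"
proof -
  have "exp (z - w) - 1 \<ge> z - w" using exp_ge_add_one_self[of "z-w"] by linarith
  hence "1/w^2 - 2*(exp (z - w) - 1)/w^3 \<le> 1/w^2 - 2*(z-w)/w^3"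
    using w by (simp add: divide_right_mono)
  also have "\<dots> = (3*w - 2*z)/w^3" using w by (simp add: field_simps power2_eq_square power3_eq_cube)
  also have "\<dots> \<le> 1/z^2"
  proof -
    have "(3*w - 2*z) * z^2 \<le> w^3"
    proof -
      have "w^3 - (3*w - 2*z) * z^2 = (w-z)^2 * (w + 2*z)"
        by (simp add: power2_eq_square power3_eq_cube algebra_simps)
      also have "\<dots> \<ge> 0" using z w by simp
      finally show ?thesis by simp
    qed
    thus ?thesis using z w by (simp add: divide_simps mult.commute)
  qed
  finally show ?thesis .
qed


lemma aux1: fixes K :: real assumes "K > 0"
  shows "2*(1/(2*K+1)) / ((1 - 1/(2*K+1))*(1 + 1/(2*K+1))) = (K + 1/2)/(K*(K+1))"
proof -
  have a: "1 - 1/(2*K+1) = (2*K)/(2*K+1)" "1 + 1/(2*K+1) = (2*K+2)/(2*K+1)" using assms by (simp_all add: field_simps)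
  have p: "2*K+1 > 0" "2*K+2 > 0" "K + 1 > 0" using assms by simp_all
  have b: "(2*K)/(2*K+1) * ((2*K+2)/(2*K+1)) = ((2*K)*(2*K+2))/((2*K+1)*(2*K+1))" by simp
  have c: "2*(1/(2*K+1)) / (((2*K)*(2*K+2))/((2*K+1)*(2*K+1))) = 2*(2*K+1)/((2*K)*(2*K+2))"
    using p assms by (simp add: divide_simps)
  have d: "2*(2*K+1)/((2*K)*(2*K+2)) = (K + 1/2)/(K*(K+1))"
    using p assms by (simp add: divide_simps) (simp add: algebra_simps)
  show ?thesis unfolding a b c d ..
qed
lemma aux2: fixes x m g0 g1 :: real assumes "x > 0"
  shows "(1/x - m/(x*x))*g1 + g0/(x*x) = (g0 + g1*(x-m))/x^2"
  using assms by (simp add: field_simps power2_eq_square)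
lemma aux3: fixes x m w :: real assumes "m > 0" "w > 0"
  shows "1/w^2 + (-2/(m*w^3))*(x-m) = 1/w^2 - 2*(x/m - 1)/w^3"
  using assms by (simp add: field_simps)

lemma L_bound:
  assumes k: "k \<ge> 1"
  shows "ln (real k + 1) - ln (real k) \<le> (real k + 1/2) / (real k * (real k + 1))"
proof -
  define y where "y = 1 / (2 * real k + 1)"
  define m where "m = real k + 1/2"
  have k1: "real k \<ge> 1" using k by simp
  have y: "0 \<le> y" "y < 1" "y \<le> 1/3" using k1 unfolding y_def by (auto simp: field_simps)
  have m: "m > 0" unfolding m_def by simp
  have e1: "real k + 1 = m * (1 + y)" "real k = m * (1 - y)"
    unfolding m_def y_def by (auto simp: field_simps)
  have l1: "ln (real k + 1) = ln m + ln (1 + y)"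
    using e1(1) m y by (simp add: ln_mult)
  have l2: "ln (real k) = ln m + ln (1 - y)"
    using e1(2) m y by (simp add: ln_mult)
  have "ln (real k + 1) - ln (real k) = ln (1 + y) - ln (1 - y)"
    unfolding l1 l2 by simp
  also have "\<dots> \<le> 2*y + 2*y^3/(3*((1-y)*(1+y)))" by (rule ln_diff_upper[OF y(1,2)])
  also have "\<dots> \<le> 2*y/((1-y)*(1+y))"
  proof -
    define P where "P = (1-y)*(1+y)"
    have yy: "y * y < 1"
    proof -
      have "y*y \<le> 1*y" using y by (intro mult_right_mono) auto
      thus ?thesis using y by simp
    qed
    have P: "P > 0" "P = 1 - y^2" using y yy unfolding P_def
      by (auto simp: power2_eq_square algebra_simps)
    have "2*y + 2*y^3/(3*P) = (2*y*P + 2*y^3/3)/P" using P by (simp add: field_simps)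
    also have "\<dots> \<le> (2*y)/P"
    proof (rule divide_right_mono)
      have "2*y*P + 2*y^3/3 = 2*y - (4/3)*y^3" unfolding P(2) by (simp add: algebra_simps power2_eq_square power3_eq_cube)
      thus "2*y*P + 2*y^3/3 \<le> 2*y" using y by simp
    qed (use P in simp)
    finally show ?thesis unfolding P_def .
  qed
  also have "\<dots> = (real k + 1/2) / (real k * (real k + 1))"
    unfolding y_def by (rule aux1) (use k1 in simp)
  finally show ?thesis .
qed

lemma piece_lower:
  assumes k: "k \<ge> 1" and t: "t + ln (real k) > 0"
  shows "integral {real k..real k + 1} (eta_integrand t) \<ge>
           1 / (real k * (real k + 1) * (t + ln (real k + 1/2))^2)"
proof -
  define m where "m = real k + 1/2"
  define w where "w = t + ln m"
  have k1: "real k \<ge> 1" using k by simp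
  have m: "m > 0" unfolding m_def by simp
  have "ln (real k) < ln m" using k1 unfolding m_def by simp
  hence w: "w > 0" unfolding w_def using t by linarith
  define g0 where "g0 = 1 / w^2"
  define g1 where "g1 = - 2 / (m * w^3)"
  define \<phi> where "\<phi> x = (1/x - m/(x*x))*g1 + g0/(x*x)" for x :: real
  define \<Phi> where "\<Phi> x = - g0/x + g1*(ln x + m/x)" for x :: real
  have ftc: "(\<phi> has_integral (\<Phi> (real k + 1) - \<Phi> (real k))) {real k..real k + 1}"
  proof (rule fundamental_theorem_of_calculus)
    fix x assume x: "x \<in> {real k..real k + 1}"
    hence "x > 0" using k1 by auto
    hence "(\<Phi> has_real_derivative \<phi> x) (at x)"
      unfolding \<Phi>_def \<phi>_def by (auto intro!: derivative_eq_intros)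
    thus "(\<Phi> has_vector_derivative \<phi> x) (at x within {real k..real k + 1})"
      by (simp add: has_real_derivative_iff_has_vector_derivative has_vector_derivative_at_within)
  qed simp
  have intf: "eta_integrand t integrable_on {real k..real k + 1}"
    by (rule integrable_continuous_interval, rule continuous_on_subset[OF f_cont[of "real k" t]])
       (use t k1 in auto)
  have pw: "\<phi> x \<le> eta_integrand t x" if x: "x \<in> {real k..real k + 1}" for x
  proof -
    have x0: "x > 0" using x k1 by auto
    define z where "z = t + ln x"
    have "ln (real k) \<le> ln x" using x k1 by simp
    hence z: "z > 0" using t unfolding z_def by linarith
    have ex: "exp (z - w) = x / m" unfolding z_def w_def using x0 m by (simp add: exp_diff)
    have "\<phi> x = (g0 + g1 * (x - m)) / x^2" unfolding \<phi>_def by (rule aux2[OF x0])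
    also have "g0 + g1 * (x - m) = 1/w^2 - 2*(exp (z - w) - 1)/w^3"
      unfolding ex g0_def g1_def by (rule aux3[OF m w])
    also have "(1/w^2 - 2*(exp (z - w) - 1)/w^3) / x^2 \<le> (1/z^2) / x^2"
      by (rule divide_right_mono[OF tangent_ineq[OF z w]]) simp
    also have "(1/z^2) / x^2 = eta_integrand t x" unfolding eta_integrand_def z_def by simp
    finally show ?thesis .
  qed
  have "\<Phi> (real k + 1) - \<Phi> (real k) \<le> integral {real k..real k + 1} (eta_integrand t)"
    by (rule has_integral_le[OF ftc integrable_integral[OF intf] pw])
  moreover have "\<Phi> (real k + 1) - \<Phi> (real k) =
      g0 / (real k * (real k + 1)) + g1 * ((ln (real k + 1) - ln (real k)) - m / (real k * (real k + 1)))"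
  proof -
    have a1: "1/real k - 1/(real k + 1) = 1/(real k * (real k + 1))" using k1 by (simp add: field_simps)
    have a2: "m/(real k + 1) - m/real k = - (m/(real k * (real k + 1)))" using k1 by (simp add: field_simps)
    have "\<Phi> (real k + 1) - \<Phi> (real k) = g0 * (1/real k - 1/(real k + 1)) +
       g1 * ((ln (real k + 1) - ln (real k)) + (m/(real k + 1) - m/real k))"
      unfolding \<Phi>_def by (simp add: algebra_simps)
    thus ?thesis unfolding a1 a2 by simp
  qed
  moreover have "g1 * ((ln (real k + 1) - ln (real k)) - m / (real k * (real k + 1))) \<ge> 0"
  proof -
    have "g1 < 0" unfolding g1_def using m w by simp
    moreover have "(ln (real k + 1) - ln (real k)) - m / (real k * (real k + 1)) \<le> 0"
      using L_bound[OF k] unfolding m_def by simp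
    ultimately show ?thesis by (simp add: mult_nonpos_nonpos less_imp_le)
  qed
  ultimately have "g0 / (real k * (real k + 1)) \<le> integral {real k..real k + 1} (eta_integrand t)"
    by linarith
  moreover have "g0 / (real k * (real k + 1)) = 1 / (real k * (real k + 1) * (t + ln (real k + 1/2))^2)"
    unfolding g0_def w_def m_def by simp
  ultimately show ?thesis by simp
qed


lemma good_k:
  assumes M: "M \<ge> 1" "t + ln (real M) > 0" and k: "k \<ge> M"
  shows "t + ln (real k) > 0" "t + ln (real k + 1/2) > 0" "k \<ge> 1"
proof -
  have "ln (real M) \<le> ln (real k)" using M k by simp
  thus k0: "t + ln (real k) > 0" using M by linarith
  have "ln (real k) \<le> ln (real k + 1/2)" using M k by simp
  thus "t + ln (real k + 1/2) > 0" using k0 by linarith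
  show "k \<ge> 1" using M k by simp
qed

lemma tm_upper_int:
  assumes k1: "k \<ge> 1" and t: "t + ln (real k) > 0"
  shows "tm t k \<le> integral {real k..real k + 1} (eta_integrand t) / 24"
proof -
  have "ln (real k) \<le> ln (real k + 1/2)" using k1 by simp
  hence c: "t + ln (real k + 1/2) > 0" using t by linarith
  have "tm t k \<le> 1 / (24 * real k * (real k + 1) * (t + ln (real k + 1/2))^2)" by (rule tm_le[OF c k1])
  also have "\<dots> = (1 / (real k * (real k + 1) * (t + ln (real k + 1/2))^2)) / 24" by simp
  also have "\<dots> \<le> integral {real k..real k + 1} (eta_integrand t) / 24"
    by (intro divide_right_mono piece_lower[OF k1 t]) simp
  finally show ?thesis .
qed

lemma tm_lower_int:
  assumes k1: "k \<ge> 1" and t: "t + ln (real k) > 0"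
  shows "tm t k \<ge> integral {real k + 1..real k + 1 + 1} (eta_integrand t) / 24"
proof -
  have "ln (real k) \<le> ln (real k + 1/2)" using k1 by simp
  hence c: "t + ln (real k + 1/2) > 0" using t by linarith
  have a: "real k > 0" "t + ln (real k) > 0" using k1 t by auto
  have intf: "eta_integrand t integrable_on {real k + 1..real k + 1 + 1}"
    by (rule integrable_continuous_interval, rule continuous_on_subset[OF f_cont[OF a]]) auto
  have "integral {real k + 1..real k + 1 + 1} (eta_integrand t) \<le> integral {real k + 1..real k + 1 + 1} (\<lambda>x. eta_integrand t (real k + 1))"
    by (rule integral_le[OF intf]) (auto intro: f_mono(1)[OF a])
  also have "\<dots> = eta_integrand t (real k + 1)" by simp
  finally show ?thesis using tm_ge[OF c k1] by simp
qed

lemma sum_shift: "sum g {M..M+d} = (\<Sum>j<Suc d. g (M+j))"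
  by (induction d) (auto simp: add_Suc_right)

lemma eta_part_eq: "eta_part t N n = sum (tm t) {N..n}"
  unfolding eta_part_def tm_def by simp

lemma main_lemma:
  assumes M: "M \<ge> 1" "t + ln (real M) > 0"
  defines "T \<equiv> (\<lambda>j. tm t (M + j))"
  shows "summable T" "eta t M = suminf T" "(\<lambda>n. eta_part t M n) \<longlonglongrightarrow> eta t M"
    "eta t M > 0"
    "eta_integrand t integrable_on {real M..}"
    "eta_integrand t integrable_on {real M + 1..}"
    "integral {real M + 1..} (eta_integrand t) / 24 \<le> eta t M"
    "eta t M \<le> integral {real M..} (eta_integrand t) / 24"
    "eta t M < 1 / (24 * real M * (t + ln (real M))^2)"
    "1 / (24 * (real M + 1) * (t + ln (real M + 1))^2) - 1 / (12 * (real M + 1) * (t + ln (real M + 1))^3) < eta t M"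
proof -
  note g = good_k[OF M]
  have a0: "real M > 0" using M by simp
  have a1: "real M + 1 > 0" "t + ln (real M + 1) > 0"
  proof -
    show "real M + 1 > 0" by simp
    have "ln (real M) \<le> ln (real M + 1)" using M by simp
    thus "t + ln (real M + 1) > 0" using M by linarith
  qed
  note P0 = f_props[OF a0 M(2)] and P1 = f_props[OF a1]
  have Tpos: "T j > 0" for j unfolding T_def by (rule tm_pos[OF g(2)]) simp
  have Tup: "T j \<le> integral {real M + real j..real M + real j + 1} (eta_integrand t) / 24" for j
    using tm_upper_int[OF g(3) g(1), of "M+j"] unfolding T_def by simp
  have Tlo: "T j \<ge> integral {real M + 1 + real j..real M + 1 + real j + 1} (eta_integrand t) / 24" for j
    using tm_lower_int[OF g(3) g(1), of "M+j"] unfolding T_def by (simp add: add_ac)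
  have s0: "(\<lambda>j. integral {real M + real j..real M + real j + 1} (eta_integrand t) / 24) sums
      (integral {real M..} (eta_integrand t) / 24)"
    by (rule sums_divide[OF P0(3)])
  have s1: "(\<lambda>j. integral {real M + 1 + real j..real M + 1 + real j + 1} (eta_integrand t) / 24) sums
      (integral {real M + 1..} (eta_integrand t) / 24)"
    by (rule sums_divide[OF P1(3)])
  show sT: "summable T"
    by (rule summable_comparison_test'[OF sums_summable[OF s0], of 0]) (use Tpos Tup in \<open>auto simp: less_imp_le\<close>)
  have lim: "(\<lambda>n. eta_part t M n) \<longlonglongrightarrow> suminf T"
  proof -
    have "(\<lambda>d. \<Sum>j<Suc d. T j) \<longlonglongrightarrow> suminf T"
      using LIMSEQ_Suc[OF summable_LIMSEQ[OF sT]] by simp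
    moreover have "eta_part t M (d + M) = (\<Sum>j<Suc d. T j)" for d
      unfolding eta_part_eq T_def using sum_shift[of "tm t" M d] by (simp add: add.commute)
    ultimately have "(\<lambda>d. eta_part t M (d + M)) \<longlonglongrightarrow> suminf T" by simp
    thus ?thesis by (rule LIMSEQ_offset)
  qed
  show e: "eta t M = suminf T" unfolding eta_def using lim by (rule limI)
  show "(\<lambda>n. eta_part t M n) \<longlonglongrightarrow> eta t M" using lim e by simp
  show "eta t M > 0" unfolding e by (rule suminf_pos[OF sT Tpos])
  show "eta_integrand t integrable_on {real M..}" using P0 by simp
  show "eta_integrand t integrable_on {real M + 1..}" using P1 by simp
  show lo: "integral {real M + 1..} (eta_integrand t) / 24 \<le> eta t M"
    unfolding e by (rule sums_le[OF _ s1 summable_sums[OF sT]]) (rule Tlo)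
  show up: "eta t M \<le> integral {real M..} (eta_integrand t) / 24"
    unfolding e by (rule sums_le[OF _ summable_sums[OF sT] s0]) (rule Tup)
  show "eta t M < 1 / (24 * real M * (t + ln (real M))^2)"
  proof -
    have "integral {real M..} (eta_integrand t) < 1 / (real M * (t + ln (real M))^2)"
      using P0(4) P0(5) by linarith
    hence lt: "integral {real M..} (eta_integrand t) / 24 < (1 / (real M * (t + ln (real M))^2)) / 24"
      by simp
    have eq: "1 / (24 * real M * (t + ln (real M))^2) = (1 / (real M * (t + ln (real M))^2)) / 24"
      by simp
    show ?thesis unfolding eq by (rule order.strict_trans1[OF up lt])
  qed
  show "1 / (24 * (real M + 1) * (t + ln (real M + 1))^2) - 1 / (12 * (real M + 1) * (t + ln (real M + 1))^3) < eta t M"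
  proof -
    define I where "I = integral {real M + 1..} (eta_integrand t)"
    define Q where "Q = integral {real M + 1..} (\<lambda>x. eta_integrand t x / (t + ln x))"
    define u where "u = t + ln (real M + 1)"
    define A where "A = real M + 1"
    have u: "u > 0" using a1 unfolding u_def by simp
    have A: "A > 0" unfolding A_def by simp
    have h1: "I + 2 * Q = 1 / (A * u^2)" using P1(4) unfolding I_def Q_def A_def u_def .
    have h2: "Q > 0" using P1(5) unfolding Q_def .
    have h3: "Q \<le> I / u" using P1(6) unfolding Q_def I_def u_def .
    have I1: "I < 1 / (A * u^2)" using h1 h2 by linarith
    have "Q < 1 / (A * u^2) / u" using h3 I1 u by (smt (verit) divide_strict_right_mono)
    hence "Q < 1 / (A * u^3)" by (simp add: power2_eq_square power3_eq_cube mult.assoc)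
    hence "I > 1 / (A * u^2) - 2 / (A * u^3)" using h1 by simp
    hence "I / 24 > 1 / (24 * A * u^2) - 1 / (12 * A * u^3)" by simp
    thus ?thesis using lo unfolding I_def A_def u_def by linarith
  qed
qed


theorem proposition3p4:
  fixes N :: nat and t :: real
  assumes hN: "N \<ge> 1" and ht: "t > - ln (real N)"
  shows
    "(\<forall>n\<ge>N. eta_part t N n > 0)
     \<and> (\<forall>n\<ge>N. eta_part t N n < eta_part t N (Suc n))
     \<and> (\<exists>B. \<forall>n\<ge>N. eta_part t N n \<le> B)
     \<and> (\<lambda>n. eta_part t N n) \<longlonglongrightarrow> eta t N
     \<and> eta t N > 0
     \<and> (\<forall>n\<ge>N. eta t N - eta_part t N (n - 1) = eta t n
          \<and> eta_integrand t integrable_on {real n..}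
          \<and> eta_integrand t integrable_on {real n + 1..}
          \<and> integral {real n + 1..} (eta_integrand t) / 24 \<le> eta t n
          \<and> eta t n \<le> integral {real n..} (eta_integrand t) / 24)
     \<and> (\<forall>n\<ge>N.
          1 / (24 * (real n + 1) * (t + ln (real n + 1))^2)
            - 1 / (12 * (real n + 1) * (t + ln (real n + 1))^3)
          < eta t N - eta_part t N (n - 1)
          \<and> eta t N - eta_part t N (n - 1) < 1 / (24 * real n * (t + ln (real n))^2))
     \<and> (\<lambda>n. eta t N - eta_part t N (n - 1)) \<sim>[at_top] (\<lambda>n. 1 / (24 * real n * (ln (real n))^2))
     \<and> (\<exists>C T. \<forall>M::nat. \<forall>s::real. M \<ge> 1 \<longrightarrow> s \<ge> T \<longrightarrow>
          \<bar>eta s M\<bar> \<le> C / (real M * s^2))"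
proof -
  have tN: "t + ln (real N) > 0" using ht by linarith
  note MN = main_lemma[OF hN tN]
  have gd: "t + ln (real n) > 0" "n \<ge> 1" if "n \<ge> N" for n using good_k[OF hN tN that] by auto
  note Mn = main_lemma[OF gd(2) gd(1)]
  define T where "T = (\<lambda>j. tm t (N + j))"
  have sT: "summable T" and eT: "eta t N = suminf T" using MN unfolding T_def by auto
  have Tpos: "T j > 0" for j unfolding T_def using good_k[OF hN tN, of "N+j"] by (intro tm_pos) auto
  have ep_shift: "eta_part t N (N + d) = (\<Sum>j<Suc d. T j)" for d
    unfolding eta_part_eq T_def by (rule sum_shift)
  have P1: "\<forall>n\<ge>N. eta_part t N n > 0"
  proof (intro allI impI)
    fix n assume n: "n \<ge> N"
    show "eta_part t N n > 0" unfolding eta_part_eq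
      by (rule sum_pos) (use n good_k[OF hN tN] in \<open>auto intro!: tm_pos\<close>)
  qed
  have P2: "\<forall>n\<ge>N. eta_part t N n < eta_part t N (Suc n)"
  proof (intro allI impI)
    fix n assume n: "n \<ge> N"
    have "eta_part t N (Suc n) = eta_part t N n + tm t (Suc n)"
      unfolding eta_part_eq using n by (simp add: sum.cl_ivl_Suc)
    moreover have "tm t (Suc n) > 0" using good_k[OF hN tN, of "Suc n"] n by (intro tm_pos) auto
    ultimately show "eta_part t N n < eta_part t N (Suc n)" by simp
  qed
  have P3: "\<exists>B. \<forall>n\<ge>N. eta_part t N n \<le> B"
  proof (intro exI allI impI)
    fix n assume n: "n \<ge> N"
    have "eta_part t N n = (\<Sum>j<Suc (n - N). T j)" using ep_shift[of "n - N"] n by simp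
    also have "\<dots> \<le> suminf T" by (rule sum_le_suminf[OF sT]) (auto intro: less_imp_le Tpos)
    finally show "eta_part t N n \<le> eta t N" using eT by simp
  qed
  have split: "eta t N - eta_part t N (n - 1) = eta t n" if n: "n \<ge> N" for n
  proof -
    have "suminf T = suminf (\<lambda>j. T (j + (n - N))) + (\<Sum>i<n - N. T i)"
      by (rule suminf_split_initial_segment[OF sT])
    moreover have "suminf (\<lambda>j. T (j + (n - N))) = eta t n"
    proof -
      have "(\<lambda>j. T (j + (n - N))) = (\<lambda>j. tm t (n + j))" unfolding T_def using n by (auto simp: add_ac)
      thus ?thesis using Mn(2)[OF n n] by simp
    qed
    moreover have "(\<Sum>i<n - N. T i) = eta_part t N (n - 1)"
    proof (cases "n = N")
      case True
      thus ?thesis using hN by (simp add: eta_part_def)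
    next
      case False
      hence "n - 1 = N + (n - 1 - N)" "n - N = Suc (n - 1 - N)" using n by auto
      thus ?thesis using ep_shift[of "n - 1 - N"] by simp
    qed
    ultimately show ?thesis using eT by simp
  qed
  have P6: "\<forall>n\<ge>N. eta t N - eta_part t N (n - 1) = eta t n
          \<and> eta_integrand t integrable_on {real n..}
          \<and> eta_integrand t integrable_on {real n + 1..}
          \<and> integral {real n + 1..} (eta_integrand t) / 24 \<le> eta t n
          \<and> eta t n \<le> integral {real n..} (eta_integrand t) / 24"
    using split Mn by blast
  have P7: "\<forall>n\<ge>N.
          1 / (24 * (real n + 1) * (t + ln (real n + 1))^2)
            - 1 / (12 * (real n + 1) * (t + ln (real n + 1))^3)
          < eta t N - eta_part t N (n - 1)
          \<and> eta t N - eta_part t N (n - 1) < 1 / (24 * real n * (t + ln (real n))^2)"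
    using split Mn by simp
  have P8: "(\<lambda>n. eta t N - eta_part t N (n - 1)) \<sim>[at_top] (\<lambda>n. 1 / (24 * real n * (ln (real n))^2))"
  proof (rule asymp_equivI')
    define L where "L n = 1 / (24 * (real n + 1) * (t + ln (real n + 1))^2)
            - 1 / (12 * (real n + 1) * (t + ln (real n + 1))^3)" for n :: nat
    define U where "U n = 1 / (24 * real n * (t + ln (real n))^2)" for n :: nat
    define G where "G n = 1 / (24 * real n * (ln (real n))^2)" for n :: nat
    have l1: "(\<lambda>n. L n / G n) \<longlonglongrightarrow> 1" unfolding L_def G_def by real_asymp
    have l2: "(\<lambda>n. U n / G n) \<longlonglongrightarrow> 1" unfolding U_def G_def by real_asymp
    have ev: "eventually (\<lambda>n. L n / G n \<le> (eta t N - eta_part t N (n - 1)) / G n \<and>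
                          (eta t N - eta_part t N (n - 1)) / G n \<le> U n / G n) sequentially"
      using eventually_ge_at_top[of "max N 2"]
    proof eventually_elim
      case (elim n)
      have "real n \<ge> 2" using elim by simp
      hence "ln (real n) > 0" by simp
      hence G: "G n > 0" unfolding G_def using \<open>real n \<ge> 2\<close> by simp
      have "L n < eta t N - eta_part t N (n - 1)" "eta t N - eta_part t N (n - 1) < U n"
        using P7 elim unfolding L_def U_def by auto
      thus ?case using G by (auto intro: divide_right_mono less_imp_le)
    qed
    show "((\<lambda>n. (eta t N - eta_part t N (n - 1)) / (1 / (24 * real n * (ln (real n))^2))) \<longlongrightarrow> 1) at_top"
      using tendsto_sandwich[OF eventually_conj_iff[THEN iffD1, OF ev, THEN conjunct1]
                                 eventually_conj_iff[THEN iffD1, OF ev, THEN conjunct2] l1 l2]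
      unfolding G_def by simp
  qed
  have P9: "\<exists>C T. \<forall>M::nat. \<forall>s::real. M \<ge> 1 \<longrightarrow> s \<ge> T \<longrightarrow>
          \<bar>eta s M\<bar> \<le> C / (real M * s^2)"
  proof (intro exI allI impI)
    fix M :: nat and s :: real assume M: "M \<ge> 1" and s: "s \<ge> 1"
    have l: "ln (real M) \<ge> 0" using M by simp
    hence ms: "s + ln (real M) > 0" using s by linarith
    note R = main_lemma[OF M ms]
    have "\<bar>eta s M\<bar> = eta s M" using R by simp
    also have "\<dots> < 1 / (24 * real M * (s + ln (real M))^2)" using R by simp
    also have "\<dots> \<le> 1 / (24 * real M * s^2)"
      using M s l ms by (intro divide_left_mono mult_left_mono power_mono mult_pos_pos) auto
    also have "\<dots> = (1/24) / (real M * s^2)" by simp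
    finally show "\<bar>eta s M\<bar> \<le> (1/24) / (real M * s^2)" by simp
  qed
  show ?thesis using P1 P2 P3 MN P6 P7 P8 P9 by blast
qed


end
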